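(* Let $a,b,n$ be positive integers and $h(j)=aj^n+b$ for $j\ge0$, $h(j)=0$ for $j<0$. Then: (1) if $a<3b$, then $\operatorname{hdepth}(h)=\lfloor a/b\rfloor+1$; (2) if $a\ge 3b$, then $\operatorname{hdepth}(h)\ge 3$.
   Context: For a nonzero function $h:\mathbb Z\to\mathbb Z_{\ge 0}$ with $h(j)=0$ for all sufficiently negative $j$, and integers $k\le d$, set $\beta_k^d(h)=\sum_{j\le k}(-1)^{k-j}\binom{d-j}{k-j}h(j)$, and $\operatorname{hdepth}(h)=\max\{d\in\mathbb Z:\ \beta_k^d(h)\ge 0\text{ for all integers }k\le d\}$. *)

theory Defs
  imports Main
begin

text \<open>The sum ranges over the finite support of h below k (h vanishes for sufficiently
  negative j), which equals the informal (finitely supported) sum.\<close>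
definition beta :: "int \<Rightarrow> int \<Rightarrow> (int \<Rightarrow> int) \<Rightarrow> int" where
  "beta k d h = (\<Sum>j | j \<le> k \<and> h j \<noteq> 0.
      (-1) ^ nat (k - j) * int (nat (d - j) choose nat (k - j)) * h j)"

definition hdepth :: "(int \<Rightarrow> int) \<Rightarrow> int" where
  "hdepth h = (GREATEST d::int. \<forall>k\<le>d. beta k d h \<ge> 0)"

end

theory Submission
  imports Defs
begin

lemma beta_expand:
  assumes hdef: "\<And>j. h j = (if j \<ge> 0 then int a * j ^ n + int b else 0)" and b: "b > 0"
  shows "beta k d h = (\<Sum>j\<in>{0..k}. (-1) ^ nat (k - j) * int (nat (d - j) choose nat (k - j)) * h j)"
proof -
  have "{j. j \<le> k \<and> h j \<noteq> 0} = {0..k}"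
  proof -
    have "(j \<le> k \<and> h j \<noteq> 0) \<longleftrightarrow> j \<in> {0..k}" for j
    proof (cases "j \<ge> 0")
      case True
      then have "h j > 0" using hdef[of j] b by (simp add: add_nonneg_pos)
      then show ?thesis using True by auto
    next
      case False then show ?thesis using hdef[of j] by auto
    qed
    then show ?thesis by blast
  qed
  then show ?thesis unfolding beta_def by simp
qed

lemma s1: "{0..1::int} = {0,1}" by auto
lemma s2: "{0..2::int} = {0,1,2}" by auto
lemma s3: "{0..3::int} = {0,1,2,3}" by auto

context
  fixes a b n :: nat and h :: "int \<Rightarrow> int"
  assumes ab: "a > 0" "b > 0" "n > 0"
    and hdef: "\<And>j. h j = (if j \<ge> 0 then int a * j ^ n + int b else 0)"
begin

lemma h0: "h 0 = int b" using hdef[of 0] ab by simp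
lemma h1: "h 1 = int a + int b" using hdef[of 1] by simp
lemma h2: "h 2 = int a * 2^n + int b" using hdef[of 2] by simp
lemma h3: "h 3 = int a * 3^n + int b" using hdef[of 3] by simp

lemma bneg: "k < 0 \<Longrightarrow> beta k d h = 0"
  using beta_expand[OF hdef ab(2)] by simp

lemma b0: "0 \<le> d \<Longrightarrow> beta 0 d h = int b"
  using beta_expand[OF hdef ab(2), of 0 d] h0 by simp

lemma b1: "1 \<le> d \<Longrightarrow> beta 1 d h = int a + int b - d * int b"
  using beta_expand[OF hdef ab(2), of 1 d] h0 h1 by (simp add: s1 algebra_simps)

lemma p2: "(2::int)^n \<ge> 2"
proof -
  have "(2::int)^1 \<le> 2^n" using ab(3) by (intro power_increasing) auto
  then show ?thesis by simp
qed

lemma p3: "(2::int)^n \<le> 3^n" by (intro power_mono) auto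

lemma m2: "int a * 2 \<le> int a * 2^n" using p2 by (intro mult_left_mono) auto
lemma m3: "int a * 2^n \<le> int a * 3^n" using p3 by (intro mult_left_mono) auto

lemma b22: "beta 2 2 h \<ge> 0"
  using beta_expand[OF hdef ab(2), of 2 2] h0 h1 h2 p2 m2 by (simp add: s2 algebra_simps)

lemma b23: "beta 2 3 h \<ge> 0"
  using beta_expand[OF hdef ab(2), of 2 3] h0 h1 h2 p2 m2 by (simp add: s2 algebra_simps numeral_eq_Suc)

lemma b33: "beta 3 3 h \<ge> 0"
  using beta_expand[OF hdef ab(2), of 3 3] h0 h1 h2 h3 p3 m3 by (simp add: s3 algebra_simps numeral_eq_Suc)

lemma good:
  assumes "1 \<le> d" "d \<le> 3" "(d-1) * int b \<le> int a"
  shows "\<forall>k\<le>d. beta k d h \<ge> 0"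
proof (intro allI impI)
  fix k assume k: "k \<le> d"
  consider "k < 0" | "k = 0" | "k = 1" | "k = 2" | "k = 3" using k assms by linarith
  then show "beta k d h \<ge> 0"
  proof cases
    case 1 then show ?thesis using bneg by simp
  next
    case 2 then show ?thesis using b0 assms by simp
  next
    case 3 then show ?thesis using b1[OF assms(1)] assms by (simp add: algebra_simps)
  next
    case 4 then have "d = 2 \<or> d = 3" using k assms by linarith
    then show ?thesis using 4 b22 b23 by auto
  next
    case 5 then have "d = 3" using k assms by linarith
    then show ?thesis using 5 b33 by auto
  qed
qed

lemma bound:
  assumes "\<forall>k\<le>d. beta k d h \<ge> 0"
  shows "d \<le> int (a div b) + 1"
proof (cases "d \<le> 0")
  case False
  then have "beta 1 d h \<ge> 0" using assms by auto
  then have "(d-1) * int b \<le> int a" using b1 False by (simp add: algebra_simps)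
  then have "(d-1) * int b div int b \<le> int a div int b" by (intro zdiv_mono1) (use ab in auto)
  then have "d - 1 \<le> int a div int b" using ab by simp
  then show ?thesis by (simp add: zdiv_int)
qed simp

end

theorem proposition3p3:
  fixes a b n :: nat and h :: "int \<Rightarrow> int"
  assumes "a > 0" "b > 0" "n > 0"
    and "\<And>j. h j = (if j \<ge> 0 then int a * j ^ n + int b else 0)"
  shows "(a < 3 * b \<longrightarrow> hdepth h = int (a div b) + 1)
       \<and> (a \<ge> 3 * b \<longrightarrow> hdepth h \<ge> 3)"
proof (intro conjI impI)
  let ?P = "\<lambda>d. \<forall>k\<le>d. beta k d h \<ge> 0"
  have bd: "\<And>d. ?P d \<Longrightarrow> d \<le> int (a div b) + 1" using bound[OF assms] .
  {
    assume lt: "a < 3 * b"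
    have "a div b < 3" using lt assms(2) by (simp add: div_less_iff_less_mult)
    moreover have "a div b * b \<le> a" by (rule div_times_less_eq_dividend)
    then have "int (a div b) * int b \<le> int a" by (metis of_nat_le_iff of_nat_mult)
    ultimately have "?P (int (a div b) + 1)" using good[OF assms] by simp
    then show "hdepth h = int (a div b) + 1" unfolding hdepth_def
      by (intro Greatest_equality) (use bd in auto)
  }
  {
    assume ge: "a \<ge> 3 * b"
    have P3: "?P 3" using good[OF assms, of 3] ge by simp
    define S where "S = {d. ?P d} \<inter> {3..int (a div b) + 1}"
    have fin: "finite S" unfolding S_def by simp
    have "3 \<in> S" unfolding S_def using P3 bd[OF P3] by simp
    then have ne: "S \<noteq> {}" by auto
    have MS: "Max S \<in> S" using fin ne by (rule Max_in)
    have "Greatest ?P = Max S"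
    proof (rule Greatest_equality)
      show "?P (Max S)" using MS unfolding S_def by simp
    next
      fix y assume y: "?P y"
      show "y \<le> Max S"
      proof (cases "y \<le> 3")
        case True then show ?thesis using Max_ge[OF fin \<open>3 \<in> S\<close>] by simp
      next
        case False then have "y \<in> S" unfolding S_def using y bd[OF y] by simp
        then show ?thesis using Max_ge[OF fin] by simp
      qed
    qed
    moreover have "3 \<le> Max S" using Max_ge[OF fin \<open>3 \<in> S\<close>] .
    ultimately show "hdepth h \<ge> 3" unfolding hdepth_def by simp
  }
qed

end
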